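(* Let $C\neq\mathbb{F}_q^n$ be a $q$-ary linear code with minimum distance $d=1$ and covering radius $\rho$. Then $C$ can be obtained, up to a permutation of coordinates, by applying the $q$-repeated code construction some number of times to a linear code $D$ which has minimum distance greater than one and covering radius $\rho$. Moreover, $C$ is completely regular if and only if $D$ is completely regular.
   Context: The $q$-repeated code of $D\subseteq\mathbb{F}_q^m$ is $\{(a,x_1,\dots,x_m): a\in\mathbb{F}_q,(x_1,\dots,x_m)\in D\}\subseteq\mathbb{F}_q^{m+1}$. Covering radius $\rho=\max_{\bf v}\min_{{\bf x}\in C}d({\bf v},{\bf x})$ (Hamming distance). A code is completely regular if for every vector ${\bf x}$, with $t=d({\bf x},C)$, the number of codewords at distance $i$ from ${\bf x}$ depends only on $t$ and $i$. *)

theory Defs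
  imports Main "HOL-Combinatorics.Permutations" "HOL-Library.Extended_Nat"
begin

definition words :: "nat \<Rightarrow> 'a list set" where
  "words n = {x. length x = n}"

definition linear_code :: "nat \<Rightarrow> 'a::field list set \<Rightarrow> bool" where
  "linear_code n C \<longleftrightarrow> C \<subseteq> words n \<and> replicate n 0 \<in> C \<and>
     (\<forall>x\<in>C. \<forall>y\<in>C. map2 (+) x y \<in> C) \<and>
     (\<forall>a. \<forall>x\<in>C. map (\<lambda>u. a * u) x \<in> C)"

definition hdist :: "'a list \<Rightarrow> 'a list \<Rightarrow> nat" where
  "hdist x y = card {i. i < length x \<and> x ! i \<noteq> y ! i}"

text \<open>Minimum distance (infinite for codes with at most one codeword).\<close>
definition min_dist :: "'a list set \<Rightarrow> enat" where
  "min_dist C = Inf {enat (hdist x y) | x y. x \<in> C \<and> y \<in> C \<and> x \<noteq> y}"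

definition dist_code :: "'a list \<Rightarrow> 'a list set \<Rightarrow> nat" where
  "dist_code v C = Min (hdist v ` C)"

definition covering_radius :: "nat \<Rightarrow> 'a list set \<Rightarrow> nat" where
  "covering_radius n C = Max ((\<lambda>v. dist_code v C) ` words n)"

definition completely_regular :: "nat \<Rightarrow> 'a list set \<Rightarrow> bool" where
  "completely_regular n C \<longleftrightarrow>
     (\<forall>x\<in>words n. \<forall>y\<in>words n. dist_code x C = dist_code y C \<longrightarrow>
        (\<forall>i. card {c\<in>C. hdist x c = i} = card {c\<in>C. hdist y c = i}))"

definition rep_code :: "'a list set \<Rightarrow> 'a list set" where
  "rep_code D = {a # x | a x. x \<in> D}"

definition permute_code :: "nat \<Rightarrow> (nat \<Rightarrow> nat) \<Rightarrow> 'a list set \<Rightarrow> 'a list set" where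
  "permute_code n \<sigma> E = (\<lambda>x. map (\<lambda>i. x ! \<sigma> i) [0..<n]) ` E"

end

theory Submission
  imports Defs
begin

abbreviation P :: "(nat \<Rightarrow> nat) \<Rightarrow> nat \<Rightarrow> 'a list \<Rightarrow> 'a list" where
  "P \<sigma> n x \<equiv> map (\<lambda>i. x ! \<sigma> i) [0..<n]"

lemma finite_words: "finite (words n :: 'a::finite list set)"
proof -
  have "words n = {xs :: 'a list. set xs \<subseteq> UNIV \<and> length xs = n}" by (auto simp: words_def)
  thus ?thesis using finite_lists_length_eq[of "UNIV :: 'a set" n] by simp
qed

lemma perm_lt: "\<sigma> permutes {..<n} \<Longrightarrow> i < n \<Longrightarrow> \<sigma> i < n"
  using permutes_in_image by fastforce

lemma P_comp:
  assumes "\<tau> permutes {..<n}"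
  shows "P \<tau> n (P \<sigma> n x) = P (\<sigma> \<circ> \<tau>) n x"
  using perm_lt[OF assms] by (auto intro!: nth_equalityI)

lemma P_id: "length x = n \<Longrightarrow> P id n x = x"
  by (auto intro!: nth_equalityI)

lemma P_inv:
  assumes "\<sigma> permutes {..<n}" "length x = n"
  shows "P (inv \<sigma>) n (P \<sigma> n x) = x"
proof -
  have "P (inv \<sigma>) n (P \<sigma> n x) = P (\<sigma> \<circ> inv \<sigma>) n x"
    by (rule P_comp[OF permutes_inv[OF assms(1)]])
  also have "\<sigma> \<circ> inv \<sigma> = id" using permutes_inv_o[OF assms(1)] by simp
  finally show ?thesis using P_id[OF assms(2)] by (simp only:)
qed

lemma P_inv2:
  assumes "\<sigma> permutes {..<n}" "length x = n"
  shows "P \<sigma> n (P (inv \<sigma>) n x) = x"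
  using P_inv[OF permutes_inv[OF assms(1)] assms(2)] inv_inv_eq[OF permutes_bij[OF assms(1)]]
  by simp

lemma P_inj:
  assumes "\<sigma> permutes {..<n}"
  shows "inj_on (P \<sigma> n) (words n)"
proof (rule inj_onI)
  fix x y assume "x \<in> words n" "y \<in> words n" "P \<sigma> n x = P \<sigma> n y"
  hence "P (inv \<sigma>) n (P \<sigma> n x) = P (inv \<sigma>) n (P \<sigma> n y)" by (simp only:)
  thus "x = y" using P_inv[OF assms, of x] P_inv[OF assms, of y] \<open>x \<in> words n\<close> \<open>y \<in> words n\<close>
    by (simp only: words_def mem_Collect_eq)
qed

lemma hdist_P:
  assumes "\<sigma> permutes {..<n}" "length x = n" "length y = n"
  shows "hdist (P \<sigma> n x) (P \<sigma> n y) = hdist x y"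
proof -
  let ?A = "{i. i < n \<and> x ! \<sigma> i \<noteq> y ! \<sigma> i}"
  have e: "{j. j < n \<and> x ! j \<noteq> y ! j} = \<sigma> ` ?A"
  proof
    show "\<sigma> ` ?A \<subseteq> {j. j < n \<and> x ! j \<noteq> y ! j}"
      using perm_lt[OF assms(1)] by blast
  next
    show "{j. j < n \<and> x ! j \<noteq> y ! j} \<subseteq> \<sigma> ` ?A"
    proof
      fix j assume j: "j \<in> {j. j < n \<and> x ! j \<noteq> y ! j}"
      have s: "\<sigma> (inv \<sigma> j) = j" using permutes_inverses(1)[OF assms(1)] by simp
      moreover have "inv \<sigma> j < n" using perm_lt[OF permutes_inv[OF assms(1)]] j by simp
      ultimately have "inv \<sigma> j \<in> ?A" using j by simp
      thus "j \<in> \<sigma> ` ?A" using s by (metis image_eqI)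
    qed
  qed
  have inj: "inj_on \<sigma> ?A"
    using permutes_inj[OF assms(1)] by (simp add: inj_on_def inj_def)
  have h1: "hdist (P \<sigma> n x) (P \<sigma> n y) = card ?A"
    unfolding hdist_def by (rule arg_cong[where f=card]) auto
  have "hdist x y = card (\<sigma> ` ?A)" unfolding hdist_def using e assms(2) by simp
  also have "\<dots> = card ?A" by (rule card_image[OF inj])
  finally show ?thesis using h1 by simp
qed

lemma map2_nth[simp]: "length x = length y \<Longrightarrow> i < length x \<Longrightarrow> map2 f x y ! i = f (x ! i) (y ! i)"
  by simp

lemma words_P:
  assumes "\<sigma> permutes {..<n}"
  shows "P \<sigma> n ` words n = words n"
proof
  show "P \<sigma> n ` words n \<subseteq> words n" by (auto simp: words_def)
next
  show "words n \<subseteq> P \<sigma> n ` words n"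
  proof
    fix v assume v: "v \<in> words n"
    hence "v = P \<sigma> n (P (inv \<sigma>) n v)" using P_inv2[OF assms, of v, symmetric] by (simp add: words_def)
    moreover have "P (inv \<sigma>) n v \<in> words n" by (simp add: words_def)
    ultimately show "v \<in> P \<sigma> n ` words n" by blast
  qed
qed

lemma dist_code_P:
  assumes "\<sigma> permutes {..<n}" "E \<subseteq> words n" "w \<in> words n"
  shows "dist_code (P \<sigma> n w) (P \<sigma> n ` E) = dist_code w E"
proof -
  have "hdist (P \<sigma> n w) ` (P \<sigma> n ` E) = (\<lambda>x. hdist (P \<sigma> n w) (P \<sigma> n x)) ` E"
    by (simp add: image_image)
  also have "\<dots> = hdist w ` E"
    by (rule image_cong[OF refl]) (use hdist_P[OF assms(1)] assms(2,3) in \<open>auto simp: words_def\<close>)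
  finally show ?thesis unfolding dist_code_def by simp
qed

lemma cr_P:
  assumes "\<sigma> permutes {..<n}" "E \<subseteq> words n"
  shows "covering_radius n (P \<sigma> n ` E) = covering_radius n E"
proof -
  have "(\<lambda>v. dist_code v (P \<sigma> n ` E)) ` words n = (\<lambda>v. dist_code v (P \<sigma> n ` E)) ` (P \<sigma> n ` words n)"
    by (subst words_P[OF assms(1)]) (rule refl)
  also have "\<dots> = (\<lambda>w. dist_code (P \<sigma> n w) (P \<sigma> n ` E)) ` words n" by (simp add: image_image)
  also have "\<dots> = (\<lambda>w. dist_code w E) ` words n"
    by (rule image_cong[OF refl]) (rule dist_code_P[OF assms])
  finally show ?thesis unfolding covering_radius_def by simp
qed

lemma count_P:
  assumes "\<sigma> permutes {..<n}" "E \<subseteq> words n" "w \<in> words n"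
  shows "card {c \<in> P \<sigma> n ` E. hdist (P \<sigma> n w) c = i} = card {c \<in> E. hdist w c = i}"
proof -
  have "{c \<in> P \<sigma> n ` E. hdist (P \<sigma> n w) c = i} = P \<sigma> n ` {c \<in> E. hdist w c = i}"
  proof (intro set_eqI iffI)
    fix c assume "c \<in> {c \<in> P \<sigma> n ` E. hdist (P \<sigma> n w) c = i}"
    then obtain x where x: "x \<in> E" "c = P \<sigma> n x" "hdist (P \<sigma> n w) c = i" by blast
    have "hdist w x = i" using x hdist_P[OF assms(1), of w x] assms(2,3) by (auto simp: words_def)
    thus "c \<in> P \<sigma> n ` {c \<in> E. hdist w c = i}" using x by blast
  next
    fix c assume "c \<in> P \<sigma> n ` {c \<in> E. hdist w c = i}"
    then obtain x where x: "x \<in> E" "c = P \<sigma> n x" "hdist w x = i" by blast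
    have "hdist (P \<sigma> n w) c = i" using x hdist_P[OF assms(1), of w x] assms(2,3) by (auto simp: words_def)
    thus "c \<in> {c \<in> P \<sigma> n ` E. hdist (P \<sigma> n w) c = i}" using x by blast
  qed
  moreover have "inj_on (P \<sigma> n) {c \<in> E. hdist w c = i}"
    by (rule inj_on_subset[OF P_inj[OF assms(1)]]) (use assms(2) in auto)
  ultimately show ?thesis by (simp add: card_image)
qed

lemma CR_P_imp:
  assumes "\<sigma> permutes {..<n}" "E \<subseteq> words n" "completely_regular n E"
  shows "completely_regular n (P \<sigma> n ` E)"
  unfolding completely_regular_def
proof (intro ballI impI allI)
  fix x y i assume x: "x \<in> words n" and y: "y \<in> words n"
    and d: "dist_code x (P \<sigma> n ` E) = dist_code y (P \<sigma> n ` E)"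
  define x0 where "x0 = P (inv \<sigma>) n x"
  define y0 where "y0 = P (inv \<sigma>) n y"
  have x0: "x0 \<in> words n" and y0: "y0 \<in> words n" by (auto simp: x0_def y0_def words_def)
  have xx: "x = P \<sigma> n x0" using P_inv2[OF assms(1), of x, symmetric] x by (simp add: x0_def words_def)
  have yy: "y = P \<sigma> n y0" using P_inv2[OF assms(1), of y, symmetric] y by (simp add: y0_def words_def)
  have "dist_code x0 E = dist_code y0 E"
    using d dist_code_P[OF assms(1,2) x0] dist_code_P[OF assms(1,2) y0] xx yy by simp
  hence "card {c \<in> E. hdist x0 c = i} = card {c \<in> E. hdist y0 c = i}"
    using assms(3) x0 y0 unfolding completely_regular_def by blast
  thus "card {c \<in> P \<sigma> n ` E. hdist x c = i} = card {c \<in> P \<sigma> n ` E. hdist y c = i}"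
    using count_P[OF assms(1,2) x0] count_P[OF assms(1,2) y0] xx yy by simp
qed

lemma P_image_inv:
  assumes "\<sigma> permutes {..<n}" "E \<subseteq> words n"
  shows "P (inv \<sigma>) n ` P \<sigma> n ` E = E"
proof -
  have "P (inv \<sigma>) n ` P \<sigma> n ` E = (\<lambda>x. P (inv \<sigma>) n (P \<sigma> n x)) ` E" by (simp add: image_image)
  also have "\<dots> = id ` E"
    by (rule image_cong[OF refl]) (use P_inv[OF assms(1)] assms(2) in \<open>auto simp: words_def\<close>)
  finally show ?thesis by simp
qed

lemma CR_P:
  assumes "\<sigma> permutes {..<n}" "E \<subseteq> words n"
  shows "completely_regular n (P \<sigma> n ` E) \<longleftrightarrow> completely_regular n E"
proof
  assume "completely_regular n (P \<sigma> n ` E)"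
  moreover have "P \<sigma> n ` E \<subseteq> words n" by (auto simp: words_def)
  ultimately have "completely_regular n (P (inv \<sigma>) n ` P \<sigma> n ` E)"
    using CR_P_imp[OF permutes_inv[OF assms(1)]] by blast
  thus "completely_regular n E" using P_image_inv[OF assms] by simp
qed (rule CR_P_imp[OF assms])

lemma lin_P:
  assumes "\<sigma> permutes {..<n}" "linear_code n C"
  shows "linear_code n (P \<sigma> n ` C)"
proof -
  note lt = perm_lt[OF assms(1)]
  have W: "C \<subseteq> words n" and Z: "replicate n 0 \<in> C"
    and A: "\<And>x y. x \<in> C \<Longrightarrow> y \<in> C \<Longrightarrow> map2 (+) x y \<in> C"
    and S: "\<And>a x. x \<in> C \<Longrightarrow> map (\<lambda>u. a * u) x \<in> C"
    using assms(2) by (auto simp: linear_code_def)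
  have z: "P \<sigma> n (replicate n 0) = replicate n (0::'a)"
    using lt by (auto intro!: nth_equalityI)
  have add: "map2 (+) (P \<sigma> n x) (P \<sigma> n y) = P \<sigma> n (map2 (+) x y)"
    if "x \<in> C" "y \<in> C" for x y
  proof -
    have "length x = n" "length y = n" using W that by (auto simp: words_def)
    thus ?thesis using lt by (auto intro!: nth_equalityI)
  qed
  have sc: "map (\<lambda>u. a * u) (P \<sigma> n x) = P \<sigma> n (map (\<lambda>u. a * u) x)"
    if "x \<in> C" for x a
  proof -
    have "length x = n" using W that by (auto simp: words_def)
    thus ?thesis using lt by (auto intro!: nth_equalityI)
  qed
  show ?thesis
    unfolding linear_code_def
  proof (intro conjI ballI allI)
    show "P \<sigma> n ` C \<subseteq> words n" by (auto simp: words_def)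
    show "replicate n 0 \<in> P \<sigma> n ` C" using image_eqI[where f="P \<sigma> n", OF z[symmetric] Z] .
  next
    fix u v assume "u \<in> P \<sigma> n ` C" "v \<in> P \<sigma> n ` C"
    then obtain x y where xy: "x \<in> C" "y \<in> C" "u = P \<sigma> n x" "v = P \<sigma> n y" by blast
    have "map2 (+) u v = P \<sigma> n (map2 (+) x y)" using add[OF xy(1,2)] xy(3,4) by simp
    thus "map2 (+) u v \<in> P \<sigma> n ` C" using A[OF xy(1,2)] by blast
  next
    fix a u assume "u \<in> P \<sigma> n ` C"
    then obtain x where x: "x \<in> C" "u = P \<sigma> n x" by blast
    have "map (\<lambda>u. a * u) u = P \<sigma> n (map (\<lambda>u. a * u) x)" using sc[OF x(1)] x(2) by simp
    thus "map (\<lambda>u. a * u) u \<in> P \<sigma> n ` C" using S[OF x(1)] by blast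
  qed
qed

lemma hdist_cons:
  assumes "length w = length x"
  shows "hdist (a # w) (b # x) = (if a = b then 0 else 1) + hdist w x"
proof -
  let ?B = "{i. i < length w \<and> w ! i \<noteq> x ! i}"
  have e: "{i. i < length (a # w) \<and> (a # w) ! i \<noteq> (b # x) ! i} = {i. i = 0 \<and> a \<noteq> b} \<union> Suc ` ?B"
  proof (intro set_eqI iffI)
    fix i assume "i \<in> {i. i < length (a # w) \<and> (a # w) ! i \<noteq> (b # x) ! i}"
    thus "i \<in> {i. i = 0 \<and> a \<noteq> b} \<union> Suc ` ?B" by (cases i) auto
  next
    fix i assume "i \<in> {i. i = 0 \<and> a \<noteq> b} \<union> Suc ` ?B"
    thus "i \<in> {i. i < length (a # w) \<and> (a # w) ! i \<noteq> (b # x) ! i}" by auto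
  qed
  have "card ({i. i = 0 \<and> a \<noteq> b} \<union> Suc ` ?B) = card {i::nat. i = 0 \<and> a \<noteq> b} + card (Suc ` ?B)"
    by (rule card_Un_disjoint) auto
  moreover have "card (Suc ` ?B) = card ?B" by (simp add: card_image)
  moreover have "card {i::nat. i = 0 \<and> a \<noteq> b} = (if a = b then 0 else 1)" by auto
  ultimately show ?thesis unfolding hdist_def using e assms by simp
qed

lemma finite_sub_words: "E \<subseteq> words n \<Longrightarrow> finite (E :: 'a::finite list set)"
  using finite_words finite_subset by blast

lemma R_words: "rep_code (words m) = words (Suc m)"
proof (intro set_eqI iffI)
  fix v assume "v \<in> words (Suc m)"
  hence "v = hd v # tl v" "tl v \<in> words m" by (cases v; auto simp: words_def)+
  thus "v \<in> rep_code (words m)" unfolding rep_code_def by blast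
qed (auto simp: rep_code_def words_def)

lemma R_sub: "E \<subseteq> words m \<Longrightarrow> rep_code E \<subseteq> words (Suc m)"
  by (auto simp: rep_code_def words_def)

lemma dist_R:
  assumes "D \<subseteq> words m" "D \<noteq> {}" "w \<in> words m"
  shows "dist_code (a # w) (rep_code D) = dist_code w (D :: 'a::finite list set)"
proof -
  have fD: "finite D" using finite_sub_words[OF assms(1)] .
  have fR: "finite (rep_code D)" using finite_sub_words[OF R_sub[OF assms(1)]] .
  let ?M = "Min (hdist w ` D)"
  have "?M \<in> hdist w ` D" using fD assms(2) by simp
  then obtain x0 where x0: "x0 \<in> D" "hdist w x0 = ?M" by auto
  have lx: "length x = m" if "x \<in> D" for x using assms(1) that by (auto simp: words_def)
  have lw: "length w = m" using assms(3) by (simp add: words_def)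
  have "Min (hdist (a # w) ` rep_code D) = ?M"
  proof (rule Min_eqI)
    show "finite (hdist (a # w) ` rep_code D)" using fR by simp
  next
    fix y assume "y \<in> hdist (a # w) ` rep_code D"
    then obtain b x where bx: "x \<in> D" "y = hdist (a # w) (b # x)" unfolding rep_code_def by auto
    have "y = (if a = b then 0 else 1) + hdist w x" using bx hdist_cons[of w x a b] lx lw by simp
    moreover have "?M \<le> hdist w x" using fD bx(1) by simp
    ultimately show "?M \<le> y" by simp
  next
    have m1: "a # x0 \<in> rep_code D" using x0(1) unfolding rep_code_def by blast
    have m2: "?M = hdist (a # w) (a # x0)" using hdist_cons[of w x0 a a] lx[OF x0(1)] lw x0(2) by simp
    show "?M \<in> hdist (a # w) ` rep_code D" by (rule rev_image_eqI[where f="hdist (a # w)", OF m1 m2])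
  qed
  thus ?thesis unfolding dist_code_def by simp
qed

lemma cr_R:
  assumes "D \<subseteq> words m" "D \<noteq> {}"
  shows "covering_radius (Suc m) (rep_code D) = covering_radius m (D :: 'a::finite list set)"
proof -
  have "(\<lambda>v. dist_code v (rep_code D)) ` words (Suc m) = (\<lambda>w. dist_code w D) ` words m"
  proof (intro set_eqI iffI)
    fix y assume "y \<in> (\<lambda>v. dist_code v (rep_code D)) ` words (Suc m)"
    then obtain v where v: "v \<in> words (Suc m)" "y = dist_code v (rep_code D)" by blast
    hence "v = hd v # tl v" "tl v \<in> words m" by (cases v; auto simp: words_def)+
    hence "y = dist_code (tl v) D" using v(2) dist_R[OF assms, of "tl v" "hd v"] by simp
    thus "y \<in> (\<lambda>w. dist_code w D) ` words m" using \<open>tl v \<in> words m\<close> by blast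
  next
    fix y assume "y \<in> (\<lambda>w. dist_code w D) ` words m"
    then obtain w where w: "w \<in> words m" "y = dist_code w D" by blast
    hence "y = dist_code (undefined # w) (rep_code D)" using dist_R[OF assms] by simp
    moreover have "undefined # w \<in> words (Suc m)" using w by (simp add: words_def)
    ultimately show "y \<in> (\<lambda>v. dist_code v (rep_code D)) ` words (Suc m)" by blast
  qed
  thus ?thesis unfolding covering_radius_def by simp
qed

lemma count_R:
  fixes D :: "'a::finite list set"
  assumes "D \<subseteq> words m" "w \<in> words m"
  shows "card {c \<in> rep_code D. hdist (a # w) c = i} =
    card {x \<in> D. hdist w x = i} + (card (UNIV :: 'a set) - 1) * card {x \<in> D. hdist w x = i - 1 \<and> i \<noteq> 0}"
    (is "card ?L = card ?F + _ * card ?G")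
proof -
  have lx: "length x = m" if "x \<in> D" for x using assms(1) that by (auto simp: words_def)
  have lw: "length w = m" using assms(2) by (simp add: words_def)
  let ?H = "(\<lambda>(b, x). b # x) ` ({b. b \<noteq> a} \<times> ?G)"
  have e: "?L = Cons a ` ?F \<union> ?H"
  proof (intro set_eqI iffI)
    fix c assume "c \<in> ?L"
    then obtain b x where bx0: "x \<in> D" "c = b # x" "hdist (a # w) c = i" unfolding rep_code_def by blast
    hence bx: "x \<in> D" "c = b # x" "hdist (a # w) (b # x) = i" by simp_all
    have h: "hdist (a # w) (b # x) = (if a = b then 0 else 1) + hdist w x"
      using hdist_cons[of w x a b] lx[OF bx(1)] lw by simp
    show "c \<in> Cons a ` ?F \<union> ?H"
    proof (cases "a = b")
      case True
      hence m: "x \<in> ?F" using bx h by simp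
      have "c = a # x" using bx(2) True by simp
      hence "c \<in> Cons a ` ?F" using rev_image_eqI[where f="Cons a", OF m] by blast
      thus ?thesis by blast
    next
      case False
      hence m: "(b, x) \<in> {b. b \<noteq> a} \<times> ?G" using bx h by auto
      have "c = (\<lambda>(b, x). b # x) (b, x)" using bx(2) by simp
      hence "c \<in> ?H" using rev_image_eqI[where f="\<lambda>(b, x). b # x", OF m] by blast
      thus ?thesis by blast
    qed
  next
    fix c assume "c \<in> Cons a ` ?F \<union> ?H"
    thus "c \<in> ?L"
    proof
      assume "c \<in> Cons a ` ?F"
      then obtain x where x: "x \<in> D" "hdist w x = i" "c = a # x" by blast
      have "c \<in> rep_code D" using x unfolding rep_code_def by blast
      moreover have "hdist (a # w) c = i" using hdist_cons[of w x a a] lx[OF x(1)] lw x by simp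
      ultimately show ?thesis by blast
    next
      assume "c \<in> ?H"
      then obtain p where p: "p \<in> {b. b \<noteq> a} \<times> ?G" "c = (\<lambda>(b, x). b # x) p" by (rule imageE)
      obtain b x where pbx: "p = (b, x)" by (cases p)
      have x: "b \<noteq> a" "x \<in> D" "hdist w x = i - 1" "i \<noteq> 0" "c = b # x" using p unfolding pbx by simp_all
      have "c \<in> rep_code D" using x unfolding rep_code_def by blast
      moreover have "hdist (a # w) c = i" using hdist_cons[of w x a b] lx[OF x(2)] lw x by simp
      ultimately show ?thesis by blast
    qed
  qed
  have fD: "finite D" using finite_sub_words[OF assms(1)] .
  have "card ?L = card (Cons a ` ?F) + card ?H"
    unfolding e
  proof (rule card_Un_disjoint)
    show "finite (Cons a ` ?F)" using fD by simp
    show "finite ?H" using fD by simp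
    show "Cons a ` ?F \<inter> ?H = {}" by fastforce
  qed
  moreover have "card (Cons a ` ?F) = card ?F" by (simp add: card_image)
  moreover have "card ?H = card ({b. b \<noteq> a} \<times> ?G)"
    by (rule card_image) (auto simp: inj_on_def)
  moreover have "card ({b. b \<noteq> a} \<times> ?G) = card {b. b \<noteq> a} * card ?G"
    by (rule card_cartesian_product)
  moreover have "card {b. b \<noteq> a} = card (UNIV :: 'a set) - 1"
  proof -
    have "{b. b \<noteq> a} = UNIV - {a}" by auto
    thus ?thesis by (simp add: card_Diff_singleton)
  qed
  ultimately show ?thesis by simp
qed

lemma R_ne: "D \<noteq> {} \<Longrightarrow> rep_code D \<noteq> {}"
  unfolding rep_code_def by blast

lemma CR_R:
  fixes D :: "'a::finite list set"
  assumes "D \<subseteq> words m" "D \<noteq> {}"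
  shows "completely_regular (Suc m) (rep_code D) \<longleftrightarrow> completely_regular m D"
proof
  assume cr: "completely_regular (Suc m) (rep_code D)"
  show "completely_regular m D"
    unfolding completely_regular_def
  proof (intro ballI impI allI)
    fix x y j assume x: "x \<in> words m" and y: "y \<in> words m" and d: "dist_code x D = dist_code y D"
    define a :: 'a where "a = undefined"
    have "dist_code (a # x) (rep_code D) = dist_code (a # y) (rep_code D)"
      using dist_R[OF assms x] dist_R[OF assms y] d by simp
    moreover have "a # x \<in> words (Suc m)" "a # y \<in> words (Suc m)" using x y by (auto simp: words_def)
    ultimately have c: "\<And>i. card {c \<in> rep_code D. hdist (a # x) c = i} = card {c \<in> rep_code D. hdist (a # y) c = i}"
      using cr unfolding completely_regular_def by blast
    have "card {z \<in> D. hdist x z = i} = card {z \<in> D. hdist y z = i}" for i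
    proof (induction i)
      case 0
      thus ?case using c[of 0] count_R[OF assms(1) x, of a 0] count_R[OF assms(1) y, of a 0] by simp
    next
      case (Suc i)
      thus ?case using c[of "Suc i"] count_R[OF assms(1) x, of a "Suc i"] count_R[OF assms(1) y, of a "Suc i"] by simp
    qed
    thus "card {c \<in> D. hdist x c = j} = card {c \<in> D. hdist y c = j}" .
  qed
next
  assume cr: "completely_regular m D"
  show "completely_regular (Suc m) (rep_code D)"
    unfolding completely_regular_def
  proof (intro ballI impI allI)
    fix v v' i assume v: "v \<in> words (Suc m)" and v': "v' \<in> words (Suc m)"
      and d: "dist_code v (rep_code D) = dist_code v' (rep_code D)"
    have ev: "v = hd v # tl v" "tl v \<in> words m" using v by (cases v; auto simp: words_def)+
    have ev': "v' = hd v' # tl v'" "tl v' \<in> words m" using v' by (cases v'; auto simp: words_def)+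
    have "dist_code (tl v) D = dist_code (tl v') D"
      using d dist_R[OF assms ev(2), of "hd v"] dist_R[OF assms ev'(2), of "hd v'"] ev(1) ev'(1) by simp
    hence f: "\<And>j. card {z \<in> D. hdist (tl v) z = j} = card {z \<in> D. hdist (tl v') z = j}"
      using cr ev(2) ev'(2) unfolding completely_regular_def by blast
    have g: "\<And>w. {z \<in> D. hdist w z = i - 1 \<and> i \<noteq> 0} = (if i = 0 then {} else {z \<in> D. hdist w z = i - 1})"
      by auto
    have "card {c \<in> rep_code D. hdist (hd v # tl v) c = i} = card {c \<in> rep_code D. hdist (hd v' # tl v') c = i}"
      using count_R[OF assms(1) ev(2), of "hd v" i] count_R[OF assms(1) ev'(2), of "hd v'" i] f g
      by simp
    thus "card {c \<in> rep_code D. hdist v c = i} = card {c \<in> rep_code D. hdist v' c = i}"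
      using ev(1) ev'(1) by simp
  qed
qed

lemma Rk_sub: "E \<subseteq> words m \<Longrightarrow> (rep_code ^^ k) E \<subseteq> words (m + k)"
  by (induction k) (auto dest: R_sub)

lemma Rk_ne: "E \<noteq> {} \<Longrightarrow> (rep_code ^^ k) E \<noteq> {}"
proof (induction k)
  case (Suc k)
  hence "(rep_code ^^ k) E \<noteq> {}" by blast
  hence "rep_code ((rep_code ^^ k) E) \<noteq> {}" by (rule R_ne)
  thus ?case by simp
qed simp

lemma cr_Rk:
  fixes D :: "'a::finite list set"
  assumes "D \<subseteq> words m" "D \<noteq> {}"
  shows "covering_radius (m + k) ((rep_code ^^ k) D) = covering_radius m D"
proof (induction k)
  case (Suc k)
  have "covering_radius (m + Suc k) ((rep_code ^^ Suc k) D) = covering_radius (Suc (m + k)) (rep_code ((rep_code ^^ k) D))"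
    by simp
  also have "\<dots> = covering_radius (m + k) ((rep_code ^^ k) D)"
    by (rule cr_R[OF Rk_sub[OF assms(1)] Rk_ne[OF assms(2)]])
  finally show ?case using Suc by simp
qed simp

lemma CR_Rk:
  fixes D :: "'a::finite list set"
  assumes "D \<subseteq> words m" "D \<noteq> {}"
  shows "completely_regular (m + k) ((rep_code ^^ k) D) \<longleftrightarrow> completely_regular m D"
proof (induction k)
  case (Suc k)
  have "completely_regular (m + Suc k) ((rep_code ^^ Suc k) D) = completely_regular (Suc (m + k)) (rep_code ((rep_code ^^ k) D))"
    by simp
  also have "\<dots> = completely_regular (m + k) ((rep_code ^^ k) D)"
    by (rule CR_R[OF Rk_sub[OF assms(1)] Rk_ne[OF assms(2)]])
  finally show ?case using Suc by simp
qed simp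

lemma rep_decomp:
  fixes C :: "'a::field list set"
  assumes lin: "linear_code (Suc n) C" and e0: "1 # replicate n 0 \<in> C"
  shows "C = rep_code (tl ` C) \<and> linear_code n (tl ` C)"
proof -
  have W: "C \<subseteq> words (Suc n)" and Z: "replicate (Suc n) 0 \<in> C"
    and A: "\<And>x y. x \<in> C \<Longrightarrow> y \<in> C \<Longrightarrow> map2 (+) x y \<in> C"
    and S: "\<And>a x. x \<in> C \<Longrightarrow> map (\<lambda>u. a * u) x \<in> C"
    using lin by (auto simp: linear_code_def)
  have split: "\<exists>a t. x = a # t \<and> length t = n" if "x \<in> C" for x
  proof -
    have "length x = Suc n" using W that by (auto simp: words_def)
    thus ?thesis by (cases x) auto
  qed
  have "C \<subseteq> rep_code (tl ` C)"
  proof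
    fix x assume x: "x \<in> C"
    then obtain a t where at: "x = a # t" using split by blast
    have "t \<in> tl ` C" using x at by force
    thus "x \<in> rep_code (tl ` C)" unfolding rep_code_def at by blast
  qed
  moreover have "rep_code (tl ` C) \<subseteq> C"
  proof
    fix c assume "c \<in> rep_code (tl ` C)"
    then obtain b x where bx: "x \<in> C" "c = b # tl x" unfolding rep_code_def by blast
    obtain a0 t where xe: "x = a0 # t" "length t = n" using split[OF bx(1)] by blast
    have r: "map (\<lambda>u. (b - a0) * u) (replicate n 0) = replicate n (0::'a)" by simp
    have t0: "map2 (+) t (replicate n 0) = t" using xe(2) by (auto intro!: nth_equalityI)
    have m: "map2 (+) x (map (\<lambda>u. (b - a0) * u) (1 # replicate n 0)) \<in> C"
      using A[OF bx(1) S[OF e0]] .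
    have "map2 (+) x (map (\<lambda>u. (b - a0) * u) (1 # replicate n 0)) = b # t"
      unfolding xe(1) using r t0 by simp
    hence "b # t \<in> C" using m by simp
    thus "c \<in> C" using bx(2) xe(1) by simp
  qed
  moreover have "linear_code n (tl ` C)"
    unfolding linear_code_def
  proof (intro conjI ballI allI)
    show "tl ` C \<subseteq> words n"
    proof
      fix u assume "u \<in> tl ` C"
      then obtain x where x: "x \<in> C" "u = tl x" by blast
      obtain a t where "x = a # t" "length t = n" using split[OF x(1)] by blast
      thus "u \<in> words n" using x(2) by (simp add: words_def)
    qed
    have "replicate n 0 = tl (replicate (Suc n) (0::'a))" by simp
    thus "replicate n 0 \<in> tl ` C" using Z by blast
  next
    fix u v assume "u \<in> tl ` C" "v \<in> tl ` C"
    then obtain x y where xy: "x \<in> C" "y \<in> C" "u = tl x" "v = tl y" by blast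
    obtain a t where at: "x = a # t" using split[OF xy(1)] by blast
    obtain b s where bs: "y = b # s" using split[OF xy(2)] by blast
    have "map2 (+) u v = tl (map2 (+) x y)" unfolding xy(3,4) at bs by simp
    thus "map2 (+) u v \<in> tl ` C" using A[OF xy(1,2)] by blast
  next
    fix a u assume "u \<in> tl ` C"
    then obtain x where x: "x \<in> C" "u = tl x" by blast
    have "map (\<lambda>u. a * u) u = tl (map (\<lambda>u. a * u) x)" using x(2) by (simp add: map_tl)
    thus "map (\<lambda>u. a * u) u \<in> tl ` C" using S[OF x(1)] by blast
  qed
  ultimately show ?thesis by blast
qed

definition sh :: "(nat \<Rightarrow> nat) \<Rightarrow> nat \<Rightarrow> nat" where
  "sh \<sigma> j = (case j of 0 \<Rightarrow> 0 | Suc j' \<Rightarrow> Suc (\<sigma> j'))"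

lemma sh_permutes:
  assumes "\<sigma> permutes {..<n}"
  shows "sh \<sigma> permutes {..<Suc n}"
  unfolding permutes_def
proof (intro conjI allI impI)
  fix x assume "x \<notin> {..<Suc n}"
  then obtain x' where x': "x = Suc x'" "x' \<notin> {..<n}" by (cases x) auto
  thus "sh \<sigma> x = x" using permutes_not_in[OF assms x'(2)] by (simp add: sh_def)
next
  fix y
  define x where "x = (case y of 0 \<Rightarrow> 0 | Suc y' \<Rightarrow> Suc (inv \<sigma> y'))"
  have ex: "sh \<sigma> x = y"
    using permutes_inverses(1)[OF assms] by (cases y) (auto simp: x_def sh_def)
  have un: "x1 = x" if "sh \<sigma> x1 = y" for x1
  proof (cases x1)
    case 0 thus ?thesis using that by (cases y) (auto simp: x_def sh_def)
  next
    case (Suc x1')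
    hence "y = Suc (\<sigma> x1')" using that by (simp add: sh_def)
    thus ?thesis using Suc permutes_inverses(2)[OF assms] by (simp add: x_def)
  qed
  show "\<exists>!x. sh \<sigma> x = y" using ex un by blast
qed

lemma P_sh_cons: "P (sh \<sigma>) (Suc n) (a # x) = a # P \<sigma> n x"
proof (rule nth_equalityI)
  show "length (P (sh \<sigma>) (Suc n) (a # x)) = length (a # P \<sigma> n x)" by simp
next
  fix j assume "j < length (P (sh \<sigma>) (Suc n) (a # x))"
  hence j: "j < Suc n" by simp
  show "P (sh \<sigma>) (Suc n) (a # x) ! j = (a # P \<sigma> n x) ! j"
  proof (cases j)
    case 0
    have "P (sh \<sigma>) (Suc n) (a # x) ! j = (a # x) ! sh \<sigma> j" using j by (simp del: upt_Suc)
    thus ?thesis using 0 by (simp add: sh_def)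
  next
    case (Suc j')
    hence "j' < n" using j by simp
    have "P (sh \<sigma>) (Suc n) (a # x) ! j = (a # x) ! sh \<sigma> j" using j by (simp del: upt_Suc)
    also have "\<dots> = x ! \<sigma> j'" using Suc by (simp add: sh_def)
    also have "\<dots> = (a # P \<sigma> n x) ! j" using Suc \<open>j' < n\<close> by simp
    finally show ?thesis .
  qed
qed

lemma R_P: "rep_code (P \<sigma> n ` E) = P (sh \<sigma>) (Suc n) ` rep_code E"
proof -
  have "rep_code (P \<sigma> n ` E) = {a # P \<sigma> n x |a x. x \<in> E}" unfolding rep_code_def by blast
  also have "\<dots> = {P (sh \<sigma>) (Suc n) (a # x) |a x. x \<in> E}" by (simp only: P_sh_cons)
  also have "\<dots> = P (sh \<sigma>) (Suc n) ` rep_code E" unfolding rep_code_def by blast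
  finally show ?thesis .
qed

lemma P_comp_img:
  assumes "\<tau> permutes {..<n}"
  shows "P \<tau> n ` P \<sigma> n ` E = P (\<sigma> \<circ> \<tau>) n ` E"
proof -
  have "P \<tau> n ` P \<sigma> n ` E = (\<lambda>x. P \<tau> n (P \<sigma> n x)) ` E" by (simp add: image_image)
  also have "\<dots> = P (\<sigma> \<circ> \<tau>) n ` E" by (rule image_cong[OF refl]) (rule P_comp[OF assms])
  finally show ?thesis .
qed

lemma weight1:
  fixes C :: "'a::field list set"
  assumes lin: "linear_code n C" and md: "\<not> 1 < min_dist C"
  shows "\<exists>i<n. map (\<lambda>j. if j = i then 1 else 0) [0..<n] \<in> C"
proof -
  have W: "C \<subseteq> words n"
    and A: "\<And>x y. x \<in> C \<Longrightarrow> y \<in> C \<Longrightarrow> map2 (+) x y \<in> C"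
    and S: "\<And>a x. x \<in> C \<Longrightarrow> map (\<lambda>u. a * u) x \<in> C"
    using lin by (auto simp: linear_code_def)
  let ?S = "{enat (hdist x y) | x y. x \<in> C \<and> y \<in> C \<and> x \<noteq> y}"
  have "Inf ?S < enat 2"
    using md unfolding min_dist_def by (cases "Inf ?S") (auto simp: one_enat_def)
  then obtain s where "s \<in> ?S" "s < enat 2" unfolding Inf_less_iff by blast
  then obtain x y where xy: "x \<in> C" "y \<in> C" "x \<noteq> y" "hdist x y < 2" by auto
  have lx: "length x = n" and ly: "length y = n" using W xy by (auto simp: words_def)
  let ?Ds = "{j. j < n \<and> x ! j \<noteq> y ! j}"
  have fin: "finite ?Ds" by simp
  have cd: "card ?Ds \<le> Suc 0" using xy(4) unfolding hdist_def lx by simp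
  have "\<exists>j<n. x ! j \<noteq> y ! j"
  proof (rule ccontr)
    assume "\<not> (\<exists>j<n. x ! j \<noteq> y ! j)"
    hence "x = y" using lx ly by (auto intro!: nth_equalityI)
    thus False using xy(3) by simp
  qed
  then obtain i where i: "i < n" "x ! i \<noteq> y ! i" by blast
  have only: "\<And>j. j < n \<Longrightarrow> j \<noteq> i \<Longrightarrow> x ! j = y ! j"
  proof (rule ccontr)
    fix j assume j: "j < n" "j \<noteq> i" "x ! j \<noteq> y ! j"
    have "i \<in> ?Ds" "j \<in> ?Ds" using i j by auto
    thus False using cd fin j(2) card_le_Suc0_iff_eq by blast
  qed
  define z where "z = map2 (+) x (map (\<lambda>u. (-1) * u) y)"
  have zC: "z \<in> C" unfolding z_def using A[OF xy(1) S[OF xy(2)]] .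
  have lz: "length z = n" using lx ly by (simp add: z_def)
  have zn: "z ! j = x ! j - y ! j" if "j < n" for j using that lx ly by (simp add: z_def)
  have zi: "z ! i \<noteq> 0" using zn[OF i(1)] i(2) by simp
  define e where "e = map (\<lambda>u. inverse (z ! i) * u) z"
  have eC: "e \<in> C" unfolding e_def by (rule S[OF zC])
  have "e = map (\<lambda>j. if j = i then 1 else 0) [0..<n]"
  proof (rule nth_equalityI)
    show "length e = length (map (\<lambda>j. if j = i then 1 else (0::'a)) [0..<n])" using lz by (simp add: e_def)
  next
    fix j assume "j < length e"
    hence j: "j < n" using lz by (simp add: e_def)
    have "e ! j = inverse (z ! i) * z ! j" using j lz by (simp add: e_def)
    moreover have "j \<noteq> i \<Longrightarrow> z ! j = 0" using zn[OF j] only[OF j] by simp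
    ultimately show "e ! j = map (\<lambda>j. if j = i then 1 else (0::'a)) [0..<n] ! j"
      using j zi by auto
  qed
  thus ?thesis using eC i(1) by auto
qed

lemma decomp_triv:
  fixes C :: "'a::field list set"
  assumes "linear_code n C" "1 < min_dist C"
  shows "\<exists>D m k \<sigma>. linear_code m D \<and> 1 < min_dist D \<and> n = m + k \<and> \<sigma> permutes {..<n} \<and>
           C = P \<sigma> n ` (rep_code ^^ k) D"
proof -
  have W: "C \<subseteq> words n" using assms(1) by (simp add: linear_code_def)
  have "P id n ` C = (\<lambda>x. x) ` C"
    by (rule image_cong[OF refl]) (use W P_id in \<open>auto simp: words_def\<close>)
  hence eq: "C = P id n ` (rep_code ^^ 0) C" by simp
  have "linear_code n C \<and> 1 < min_dist C \<and> n = n + 0 \<and> id permutes {..<n} \<and>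
           C = P id n ` (rep_code ^^ 0) C"
  proof (intro conjI)
    show "linear_code n C" by (rule assms(1))
    show "1 < min_dist C" by (rule assms(2))
    show "n = n + 0" by simp
    show "id permutes {..<n}" by (rule permutes_id)
    show "C = P id n ` (rep_code ^^ 0) C" by (rule eq)
  qed
  thus ?thesis by (intro exI)
qed

lemma decomp:
  fixes C :: "'a::field list set"
  shows "linear_code n C \<Longrightarrow> \<exists>D m k \<sigma>. linear_code m D \<and> 1 < min_dist D \<and> n = m + k \<and>
           \<sigma> permutes {..<n} \<and> C = P \<sigma> n ` (rep_code ^^ k) D"
proof (induction n arbitrary: C)
  case 0
  have W: "C \<subseteq> words 0" using 0 by (simp add: linear_code_def)
  have "{enat (hdist x y) | x y. x \<in> C \<and> y \<in> C \<and> x \<noteq> y} = {}"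
    using W by (auto simp: words_def)
  hence "min_dist C = Inf ({}::enat set)" unfolding min_dist_def by (rule arg_cong)
  hence "min_dist C = \<infinity>" by (simp add: top_enat_def)
  hence "1 < min_dist C" by (simp add: one_enat_def)
  thus ?case using decomp_triv[OF 0] by blast
next
  case (Suc n)
  note lin = Suc.prems
  show ?case
  proof (cases "1 < min_dist C")
    case True thus ?thesis using decomp_triv[OF lin] by blast
  next
    case False
    obtain i where i: "i < Suc n" "map (\<lambda>j. if j = i then 1 else 0) [0..<Suc n] \<in> C"
      using weight1[OF lin False] by blast
    define e :: "'a list" where "e = map (\<lambda>j. if j = i then 1 else 0) [0..<Suc n]"
    define \<tau> where "\<tau> = Transposition.transpose 0 i"
    have tp: "\<tau> permutes {..<Suc n}" unfolding \<tau>_def using i(1) by (intro permutes_swap_id) auto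
    define C' where "C' = P \<tau> (Suc n) ` C"
    have lin': "linear_code (Suc n) C'" unfolding C'_def by (rule lin_P[OF tp lin])
    have Pe: "P \<tau> (Suc n) e = 1 # replicate n 0"
    proof (rule nth_equalityI)
      show "length (P \<tau> (Suc n) e) = length (1 # replicate n (0::'a))" by simp
    next
      fix j assume "j < length (P \<tau> (Suc n) e)"
      hence j: "j < Suc n" by simp
      have tj: "\<tau> j < Suc n" using perm_lt[OF tp j] .
      have "P \<tau> (Suc n) e ! j = e ! \<tau> j" using j by (simp del: upt_Suc)
      also have "\<dots> = (if \<tau> j = i then 1 else 0)" using tj by (simp add: e_def del: upt_Suc)
      also have "\<dots> = (if j = 0 then 1 else 0)" by (auto simp: \<tau>_def transpose_eq_iff)
      also have "\<dots> = (1 # replicate n (0::'a)) ! j" using j by (cases j) auto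
      finally show "P \<tau> (Suc n) e ! j = (1 # replicate n (0::'a)) ! j" .
    qed
    have eC: "e \<in> C" using i(2) unfolding e_def .
    have e0: "1 # replicate n 0 \<in> C'" unfolding C'_def
      by (rule rev_image_eqI[where f="P \<tau> (Suc n)", OF eC Pe[symmetric]])
    have rd: "C' = rep_code (tl ` C')" "linear_code n (tl ` C')"
      using rep_decomp[OF lin' e0] by auto
    obtain D m k \<sigma> where IH: "linear_code m D" "1 < min_dist D" "n = m + k" "\<sigma> permutes {..<n}"
      "tl ` C' = P \<sigma> n ` (rep_code ^^ k) D"
      using Suc.IH[OF rd(2)] by blast
    have W: "C \<subseteq> words (Suc n)" using lin by (simp add: linear_code_def)
    have "C = P (inv \<tau>) (Suc n) ` C'" unfolding C'_def using P_image_inv[OF tp W] by simp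
    also have "\<dots> = P \<tau> (Suc n) ` C'" by (simp add: \<tau>_def)
    also have "C' = P (sh \<sigma>) (Suc n) ` rep_code ((rep_code ^^ k) D)"
    proof -
      have "C' = rep_code (tl ` C')" by (rule rd(1))
      also have "\<dots> = rep_code (P \<sigma> n ` (rep_code ^^ k) D)" by (simp only: IH(5))
      also have "\<dots> = P (sh \<sigma>) (Suc n) ` rep_code ((rep_code ^^ k) D)" by (rule R_P)
      finally show ?thesis .
    qed
    finally have "C = P (sh \<sigma> \<circ> \<tau>) (Suc n) ` (rep_code ^^ Suc k) D"
      using P_comp_img[OF tp] by simp
    moreover have "sh \<sigma> \<circ> \<tau> permutes {..<Suc n}"
      by (rule permutes_compose[OF tp sh_permutes[OF IH(4)]])
    moreover have "Suc n = m + Suc k" using IH(3) by simp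
    ultimately show ?thesis using IH(1,2) by blast
  qed
qed

theorem corollary2p4:
  fixes C :: "'a::{finite,field} list set" and n \<rho> :: nat
  assumes "linear_code n C"
    and "C \<noteq> words n"
    and "min_dist C = 1"
    and "covering_radius n C = \<rho>"
  shows "\<exists>(D :: 'a list set) m k \<sigma>.
           linear_code m D \<and> min_dist D > 1 \<and> covering_radius m D = \<rho> \<and>
           n = m + k \<and> \<sigma> permutes {..<n} \<and>
           C = permute_code n \<sigma> ((rep_code ^^ k) D) \<and>
           (completely_regular n C \<longleftrightarrow> completely_regular m D)"
proof -
  obtain D m k \<sigma> where d: "linear_code m D" "1 < min_dist D" "n = m + k" "\<sigma> permutes {..<n}"
    "C = P \<sigma> n ` (rep_code ^^ k) D"
    using decomp[OF assms(1)] by blast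
  have DW: "D \<subseteq> words m" and DN: "D \<noteq> {}" using d(1) by (auto simp: linear_code_def)
  have EW: "(rep_code ^^ k) D \<subseteq> words n" using Rk_sub[OF DW] d(3) by simp
  have "covering_radius n C = covering_radius n ((rep_code ^^ k) D)"
    using cr_P[OF d(4) EW] d(5) by simp
  also have "\<dots> = covering_radius m D" using cr_Rk[OF DW DN] d(3) by simp
  finally have cr: "covering_radius m D = \<rho>" using assms(4) by simp
  have "completely_regular n C \<longleftrightarrow> completely_regular n ((rep_code ^^ k) D)"
    using CR_P[OF d(4) EW] d(5) by simp
  also have "\<dots> \<longleftrightarrow> completely_regular m D" using CR_Rk[OF DW DN] d(3) by simp
  finally have crr: "completely_regular n C \<longleftrightarrow> completely_regular m D" .
  have "C = permute_code n \<sigma> ((rep_code ^^ k) D)" using d(5) by (simp add: permute_code_def)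
  thus ?thesis using d(1-4) cr crr by blast
qed

end
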